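(* Let $E=(A\subset B)\in\mathcal S$ have Klein tableau $\Pi=[\gamma^0,\ldots,\gamma^e;\varphi^2,\ldots,\varphi^e]$ and let $\ell\le e$ be a natural number. Then the embedding $E|^\ell=(A/p^\ell A\subset B/p^\ell A)$ has Klein tableau $$\Pi(E|^\ell)=[\gamma^0,\ldots,\gamma^\ell;\varphi^2,\ldots,\varphi^\ell]=\Pi|^\ell.$$
   Context: Let $R$ be a commutative principal ideal domain, $p$ a generator of a maximal ideal, $k=R/(p)$. A $p$-module is a finite-length $R$-module annihilated by some power of $p$. For a $p$-module $B$, $\mathrm{type}(B)$ is the partition $\beta$ with conjugate $\beta'_i=\dim_kp^{i-1}B/p^iB$. $\mathcal S$ is the category of embeddings $(A\subset B)$ of submodules in $p$-modules. Partitions are drawn with the $i$-th column of length equal to the $i$-th part, rows numbered from the top. Klein tableau of $E=(A\subset B)$, $e$ the exponent of $A$: $\Pi(E)=[\gamma^0,\ldots,\gamma^e;\varphi^2,\ldots,\varphi^e]$ with $\gamma^i=\mathrm{type}(B/p^iA)$, and $\varphi^\ell$ the unique map from the boxes of the skew diagram $\gamma^\ell\setminus\gamma^{\ell-1}$ to positive integers, weakly increasing from left to right in each row, such that for $r\ge1$ the number of boxes in row $m$ with value $r$ equals $(\gamma^{\ell,r})'_m-(\gamma^{\ell,r-1})'_m$, where $\gamma^{\ell,r}=\mathrm{type}\big(B/(p^\ell A+p(p^{\ell-2}A\cap p^rB))\big)$. For $\ell\le e$, the restriction is $\Pi|^\ell=[\gamma^0,\ldots,\gamma^\ell;\varphi^2,\ldots,\varphi^\ell]$.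 *)

theory Defs
  imports "HOL-Algebra.Algebra"
begin

definition pmult :: "('a, 'b) ring_scheme \<Rightarrow> ('a, 'c, 'd) module_scheme \<Rightarrow> 'a \<Rightarrow> nat \<Rightarrow> 'c set \<Rightarrow> 'c set"
  where "pmult R M p i U = (\<lambda>x. smult M (pow R p i) x) ` U"

definition quot_mod :: "('a, 'c, 'd) module_scheme \<Rightarrow> 'c set \<Rightarrow> ('a, 'c set) module"
  where "quot_mod M N = (undefined :: ('a, 'c set) module)
    \<lparr> carrier := A_RCOSETS M N,
      ring.zero := N,
      add := (\<lambda>U V. set_add M U V),
      smult := (\<lambda>r U. set_add M ((\<lambda>x. smult M r x) ` U) N) \<rparr>"

definition finite_length :: "('a, 'b) ring_scheme \<Rightarrow> ('a, 'c, 'd) module_scheme \<Rightarrow> bool"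
  where "finite_length R M \<longleftrightarrow> (\<exists>n. \<forall>(C :: nat \<Rightarrow> 'c set) k.
      (\<forall>j\<le>k. submodule (C j) R M) \<and> (\<forall>j<k. C j \<subset> C (Suc j)) \<longrightarrow> k \<le> n)"

definition p_module :: "('a, 'b) ring_scheme \<Rightarrow> 'a \<Rightarrow> ('a, 'c, 'd) module_scheme \<Rightarrow> bool"
  where "p_module R p M \<longleftrightarrow> module R M \<and> finite_length R M \<and>
      (\<exists>n. \<forall>x\<in>carrier M. smult M (pow R p (n::nat)) x = ring.zero M)"

text \<open>Linear independence over k = R/(p) of a finite set S of elements of a module annihilated
  by p (coefficients in k lifted to R), and the k-dimension.\<close>
definition k_indep :: "('a, 'b) ring_scheme \<Rightarrow> 'a \<Rightarrow> ('a, 'c, 'd) module_scheme \<Rightarrow> 'c set \<Rightarrow> bool"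
  where "k_indep R p M S \<longleftrightarrow> S \<subseteq> carrier M \<and>
     (\<forall>c \<in> S \<rightarrow> carrier R. finsum M (\<lambda>s. smult M (c s) s) S = ring.zero M \<longrightarrow> (\<forall>s\<in>S. c s \<in> cgenideal R p))"

definition k_dim :: "('a, 'b) ring_scheme \<Rightarrow> 'a \<Rightarrow> ('a, 'c, 'd) module_scheme \<Rightarrow> nat"
  where "k_dim R p M = (GREATEST n. \<exists>S. finite S \<and> card S = n \<and> k_indep R p M S)"

text \<open>A partition is a function nat => nat, parts indexed from 1 (value at 0 irrelevant / 0).
  Drawn with the i-th column of length the i-th part; the box in row m, column i is (m,i).\<close>
definition conjp :: "(nat \<Rightarrow> nat) \<Rightarrow> nat \<Rightarrow> nat"
  where "conjp \<alpha> j = card {i. 1 \<le> i \<and> j \<le> \<alpha> i}"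

definition boxes :: "(nat \<Rightarrow> nat) \<Rightarrow> (nat \<times> nat) set"
  where "boxes \<alpha> = {(m, i). 1 \<le> i \<and> 1 \<le> m \<and> m \<le> \<alpha> i}"

definition ptype :: "('a, 'b) ring_scheme \<Rightarrow> 'a \<Rightarrow> ('a, 'c, 'd) module_scheme \<Rightarrow> nat \<Rightarrow> nat"
  where "ptype R p M = conjp (\<lambda>i. if i = 0 then 0 else
      k_dim R p (quot_mod (M\<lparr>carrier := pmult R M p (i - 1) (carrier M)\<rparr>)
                          (pmult R M p i (carrier M))))"

definition expo :: "('a, 'b) ring_scheme \<Rightarrow> 'a \<Rightarrow> ('a, 'c, 'd) module_scheme \<Rightarrow> 'c set \<Rightarrow> nat"
  where "expo R p M A = (LEAST n. pmult R M p n A = {ring.zero M})"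

definition gam :: "('a, 'b) ring_scheme \<Rightarrow> 'a \<Rightarrow> ('a, 'c, 'd) module_scheme \<Rightarrow> 'c set \<Rightarrow> nat \<Rightarrow> nat \<Rightarrow> nat"
  where "gam R p M A i = ptype R p (quot_mod M (pmult R M p i A))"

definition gam2 :: "('a, 'b) ring_scheme \<Rightarrow> 'a \<Rightarrow> ('a, 'c, 'd) module_scheme \<Rightarrow> 'c set \<Rightarrow> nat \<Rightarrow> nat \<Rightarrow> nat \<Rightarrow> nat"
  where "gam2 R p M A l r = ptype R p (quot_mod M
      (set_add M (pmult R M p l A) (pmult R M p 1 (pmult R M p (l - 2) A \<inter> pmult R M p r (carrier M)))))"

definition skew :: "('a, 'b) ring_scheme \<Rightarrow> 'a \<Rightarrow> ('a, 'c, 'd) module_scheme \<Rightarrow> 'c set \<Rightarrow> nat \<Rightarrow> (nat \<times> nat) set"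
  where "skew R p M A l = boxes (gam R p M A l) - boxes (gam R p M A (l - 1))"

definition phi_ok :: "('a, 'b) ring_scheme \<Rightarrow> 'a \<Rightarrow> ('a, 'c, 'd) module_scheme \<Rightarrow> 'c set \<Rightarrow> nat \<Rightarrow> (nat \<times> nat \<Rightarrow> nat) \<Rightarrow> bool"
  where "phi_ok R p M A l \<phi> \<longleftrightarrow>
     (\<forall>b. b \<notin> skew R p M A l \<longrightarrow> \<phi> b = 0) \<and>
     (\<forall>b \<in> skew R p M A l. 0 < \<phi> b) \<and>
     (\<forall>m i j. (m, i) \<in> skew R p M A l \<and> (m, j) \<in> skew R p M A l \<and> i \<le> j \<longrightarrow> \<phi> (m, i) \<le> \<phi> (m, j)) \<and>
     (\<forall>r\<ge>1. \<forall>m\<ge>1. int (card {i. (m, i) \<in> skew R p M A l \<and> \<phi> (m, i) = r})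
          = int (conjp (gam2 R p M A l r) m) - int (conjp (gam2 R p M A l (r - 1)) m))"

definition phi :: "('a, 'b) ring_scheme \<Rightarrow> 'a \<Rightarrow> ('a, 'c, 'd) module_scheme \<Rightarrow> 'c set \<Rightarrow> nat \<Rightarrow> nat \<times> nat \<Rightarrow> nat"
  where "phi R p M A l = (THE \<phi>. phi_ok R p M A l \<phi>)"

definition klein :: "('a, 'b) ring_scheme \<Rightarrow> 'a \<Rightarrow> ('a, 'c, 'd) module_scheme \<Rightarrow> 'c set \<Rightarrow>
    (nat \<Rightarrow> nat) list \<times> (nat \<times> nat \<Rightarrow> nat) list"
  where "klein R p M A = (map (gam R p M A) [0..<expo R p M A + 1], map (phi R p M A) [2..<expo R p M A + 1])"

definition restr :: "('x list \<times> 'y list) \<Rightarrow> nat \<Rightarrow> ('x list \<times> 'y list)"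
  where "restr T l = (take (l + 1) (fst T), take (l - 1) (snd T))"

end

theory Submission
  imports Defs
begin


lemma cg_transfer:
  assumes "comm_group G" "carrier H = carrier G" "monoid.mult H = monoid.mult G" "one H = one G"
  shows "comm_group H"
proof -
  interpret G: comm_group G by fact
  show ?thesis
  proof (rule comm_groupI)
    fix x y z assume "x \<in> carrier H" "y \<in> carrier H" "z \<in> carrier H"
    then show "x \<otimes>\<^bsub>H\<^esub> y \<otimes>\<^bsub>H\<^esub> z = x \<otimes>\<^bsub>H\<^esub> (y \<otimes>\<^bsub>H\<^esub> z)"
      by (simp add: assms(2-4) G.m_assoc)
  next
    fix x y assume "x \<in> carrier H" "y \<in> carrier H"
    then show "x \<otimes>\<^bsub>H\<^esub> y = y \<otimes>\<^bsub>H\<^esub> x" by (simp add: assms(2-4) G.m_comm)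
  next
    fix x y assume "x \<in> carrier H" "y \<in> carrier H"
    then show "x \<otimes>\<^bsub>H\<^esub> y \<in> carrier H" by (simp add: assms(2-4))
  next
    show "\<one>\<^bsub>H\<^esub> \<in> carrier H" by (simp add: assms(2-4))
  next
    fix x assume "x \<in> carrier H"
    then show "\<one>\<^bsub>H\<^esub> \<otimes>\<^bsub>H\<^esub> x = x" by (simp add: assms(2-4))
  next
    fix x assume "x \<in> carrier H"
    then show "\<exists>y \<in> carrier H. y \<otimes>\<^bsub>H\<^esub> x = \<one>\<^bsub>H\<^esub>" using G.l_inv_ex by (simp add: assms(2-4))
  qed
qed

context module begin

lemma sm_sub: assumes "submodule N R M"
  shows "N \<subseteq> carrier M" "\<zero>\<^bsub>M\<^esub> \<in> N"
    "\<And>a b. a \<in> N \<Longrightarrow> b \<in> N \<Longrightarrow> a \<oplus>\<^bsub>M\<^esub> b \<in> N"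
    "\<And>a. a \<in> N \<Longrightarrow> \<ominus>\<^bsub>M\<^esub> a \<in> N"
    "\<And>r a. r \<in> carrier R \<Longrightarrow> a \<in> N \<Longrightarrow> r \<odot>\<^bsub>M\<^esub> a \<in> N"
proof -
  show "N \<subseteq> carrier M" using submoduleE[OF assms] by auto
  show "\<zero>\<^bsub>M\<^esub> \<in> N" using subgroup.one_closed[OF submodule.axioms(1)[OF assms]] by simp
qed (use submoduleE[OF assms] in auto)

lemma coset_eq: "N +>\<^bsub>M\<^esub> a = {n \<oplus>\<^bsub>M\<^esub> a | n. n \<in> N}"
  by (auto simp: a_r_coset_def')

lemma set_add_eq: "U <+>\<^bsub>M\<^esub> V = {u \<oplus>\<^bsub>M\<^esub> v | u v. u \<in> U \<and> v \<in> V}"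
  by (auto simp: set_add_def')

lemma coset_sum: assumes "submodule N R M" "a \<in> carrier M" "b \<in> carrier M"
  shows "(N +>\<^bsub>M\<^esub> a) <+>\<^bsub>M\<^esub> (N +>\<^bsub>M\<^esub> b) = N +>\<^bsub>M\<^esub> (a \<oplus>\<^bsub>M\<^esub> b)"
proof (intro Set.set_eqI iffI)
  note S = sm_sub[OF assms(1)]
  fix x assume "x \<in> (N +>\<^bsub>M\<^esub> a) <+>\<^bsub>M\<^esub> (N +>\<^bsub>M\<^esub> b)"
  then obtain n m where nm: "n \<in> N" "m \<in> N" "x = (n \<oplus>\<^bsub>M\<^esub> a) \<oplus>\<^bsub>M\<^esub> (m \<oplus>\<^bsub>M\<^esub> b)"
    unfolding coset_eq set_add_eq by blast
  have c: "n \<in> carrier M" "m \<in> carrier M" using nm S(1) by auto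
  have "x = (n \<oplus>\<^bsub>M\<^esub> m) \<oplus>\<^bsub>M\<^esub> (a \<oplus>\<^bsub>M\<^esub> b)" using nm(3) c assms by (simp add: a_ac)
  then show "x \<in> N +>\<^bsub>M\<^esub> (a \<oplus>\<^bsub>M\<^esub> b)" unfolding coset_eq using nm S by blast
next
  note S = sm_sub[OF assms(1)]
  fix x assume "x \<in> N +>\<^bsub>M\<^esub> (a \<oplus>\<^bsub>M\<^esub> b)"
  then obtain n where n: "n \<in> N" "x = n \<oplus>\<^bsub>M\<^esub> (a \<oplus>\<^bsub>M\<^esub> b)" unfolding coset_eq by blast
  have c: "n \<in> carrier M" using n S(1) by auto
  have "x = (n \<oplus>\<^bsub>M\<^esub> a) \<oplus>\<^bsub>M\<^esub> (\<zero>\<^bsub>M\<^esub> \<oplus>\<^bsub>M\<^esub> b)" using n(2) c assms by (simp add: a_ac)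
  then show "x \<in> (N +>\<^bsub>M\<^esub> a) <+>\<^bsub>M\<^esub> (N +>\<^bsub>M\<^esub> b)"
    unfolding coset_eq set_add_eq using n S by blast
qed

lemma coset_smult: assumes "submodule N R M" "a \<in> carrier M" "r \<in> carrier R"
  shows "((\<lambda>x. r \<odot>\<^bsub>M\<^esub> x) ` (N +>\<^bsub>M\<^esub> a)) <+>\<^bsub>M\<^esub> N = N +>\<^bsub>M\<^esub> (r \<odot>\<^bsub>M\<^esub> a)"
proof (intro Set.set_eqI iffI)
  note S = sm_sub[OF assms(1)]
  fix x assume "x \<in> ((\<lambda>x. r \<odot>\<^bsub>M\<^esub> x) ` (N +>\<^bsub>M\<^esub> a)) <+>\<^bsub>M\<^esub> N"
  then obtain n m where nm: "n \<in> N" "m \<in> N" "x = r \<odot>\<^bsub>M\<^esub> (n \<oplus>\<^bsub>M\<^esub> a) \<oplus>\<^bsub>M\<^esub> m"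
    unfolding coset_eq set_add_eq by blast
  have c: "n \<in> carrier M" "m \<in> carrier M" using nm S(1) by auto
  have "x = (r \<odot>\<^bsub>M\<^esub> n \<oplus>\<^bsub>M\<^esub> m) \<oplus>\<^bsub>M\<^esub> (r \<odot>\<^bsub>M\<^esub> a)" using nm(3) c assms
    by (simp add: a_ac smult_r_distr)
  moreover have "r \<odot>\<^bsub>M\<^esub> n \<oplus>\<^bsub>M\<^esub> m \<in> N" using nm S(3,5) assms(3) by simp
  ultimately show "x \<in> N +>\<^bsub>M\<^esub> (r \<odot>\<^bsub>M\<^esub> a)" unfolding coset_eq by blast
next
  note S = sm_sub[OF assms(1)]
  fix x assume "x \<in> N +>\<^bsub>M\<^esub> (r \<odot>\<^bsub>M\<^esub> a)"
  then obtain n where n: "n \<in> N" "x = n \<oplus>\<^bsub>M\<^esub> (r \<odot>\<^bsub>M\<^esub> a)" unfolding coset_eq by blast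
  have c: "n \<in> carrier M" using n S(1) by auto
  have "x = r \<odot>\<^bsub>M\<^esub> (\<zero>\<^bsub>M\<^esub> \<oplus>\<^bsub>M\<^esub> a) \<oplus>\<^bsub>M\<^esub> n" using n(2) c assms by (simp add: a_ac)
  moreover have "\<zero>\<^bsub>M\<^esub> \<oplus>\<^bsub>M\<^esub> a \<in> N +>\<^bsub>M\<^esub> a" unfolding coset_eq using S(2) by blast
  ultimately show "x \<in> ((\<lambda>x. r \<odot>\<^bsub>M\<^esub> x) ` (N +>\<^bsub>M\<^esub> a)) <+>\<^bsub>M\<^esub> N"
    unfolding set_add_eq using n(1) by blast
qed


lemma quot_carrier: "carrier (quot_mod M N) = {N +>\<^bsub>M\<^esub> a | a. a \<in> carrier M}"
  by (auto simp: quot_mod_def A_RCOSETS_def')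

lemma quot_add: "U \<oplus>\<^bsub>quot_mod M N\<^esub> V = U <+>\<^bsub>M\<^esub> V"
  by (simp add: quot_mod_def)
lemma quot_zero: "\<zero>\<^bsub>quot_mod M N\<^esub> = N"
  by (simp add: quot_mod_def)
lemma quot_smult: "r \<odot>\<^bsub>quot_mod M N\<^esub> U = ((\<lambda>x. r \<odot>\<^bsub>M\<^esub> x) ` U) <+>\<^bsub>M\<^esub> N"
  by (simp add: quot_mod_def)

lemma quot_abelian: assumes "submodule N R M" shows "abelian_group (quot_mod M N)"
proof -
  have as: "additive_subgroup N M" unfolding additive_subgroup_def by (rule submodule.axioms(1)[OF assms])
  have "abelian_subgroup N M"
    by (rule abelian_subgroupI3[OF as abelian_group_axioms])
  then have cg: "comm_group (M A_Mod N)" by (rule abelian_subgroup.a_factorgroup_is_comm_group)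
  have e1: "carrier (add_monoid (quot_mod M N)) = carrier (M A_Mod N)"
    unfolding quot_mod_def A_FactGroup_def FactGroup_def A_RCOSETS_def by simp
  have e2: "monoid.mult (add_monoid (quot_mod M N)) = monoid.mult (M A_Mod N)"
    unfolding quot_mod_def A_FactGroup_def FactGroup_def set_add_def by simp
  have e3: "one (add_monoid (quot_mod M N)) = one (M A_Mod N)"
    unfolding quot_mod_def A_FactGroup_def FactGroup_def by simp
  have cg2: "comm_group (add_monoid (quot_mod M N))"
    by (rule cg_transfer[OF cg e1 e2 e3])
  show ?thesis unfolding abelian_group_def abelian_monoid_def abelian_group_axioms_def
    using cg2 comm_group.axioms(1) by blast
qed

lemma quot_module: assumes "submodule N R M" shows "module R (quot_mod M N)"
proof -
  note C = coset_sum[OF assms] coset_smult[OF assms]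
  have D: "\<And>U. U \<in> carrier (quot_mod M N) \<Longrightarrow> \<exists>u. u \<in> carrier M \<and> U = N +>\<^bsub>M\<^esub> u"
    unfolding quot_carrier by blast
  show ?thesis
  proof (rule moduleI)
    show "cring R" by (rule is_cring)
    show "abelian_group (quot_mod M N)" by (rule quot_abelian[OF assms])
  next
    fix a x assume a: "a \<in> carrier R" and x: "x \<in> carrier (quot_mod M N)"
    obtain u where u: "u \<in> carrier M" "x = N +>\<^bsub>M\<^esub> u" using D[OF x] by blast
    show "a \<odot>\<^bsub>quot_mod M N\<^esub> x \<in> carrier (quot_mod M N)"
      using u a by (auto simp: quot_smult C quot_carrier)
  next
    fix a b x assume a: "a \<in> carrier R" and b: "b \<in> carrier R" and x: "x \<in> carrier (quot_mod M N)"
    obtain u where u: "u \<in> carrier M" "x = N +>\<^bsub>M\<^esub> u" using D[OF x] by blast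
    show "(a \<oplus>\<^bsub>R\<^esub> b) \<odot>\<^bsub>quot_mod M N\<^esub> x = a \<odot>\<^bsub>quot_mod M N\<^esub> x \<oplus>\<^bsub>quot_mod M N\<^esub> b \<odot>\<^bsub>quot_mod M N\<^esub> x"
      using u a b by (simp add: quot_smult quot_add C smult_l_distr)
  next
    fix a b x assume a: "a \<in> carrier R" and b: "b \<in> carrier R" and x: "x \<in> carrier (quot_mod M N)"
    obtain u where u: "u \<in> carrier M" "x = N +>\<^bsub>M\<^esub> u" using D[OF x] by blast
    show "(a \<otimes>\<^bsub>R\<^esub> b) \<odot>\<^bsub>quot_mod M N\<^esub> x = a \<odot>\<^bsub>quot_mod M N\<^esub> (b \<odot>\<^bsub>quot_mod M N\<^esub> x)"
      using u a b by (simp add: quot_smult C smult_assoc1)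
  next
    fix x assume x: "x \<in> carrier (quot_mod M N)"
    obtain u where u: "u \<in> carrier M" "x = N +>\<^bsub>M\<^esub> u" using D[OF x] by blast
    show "\<one>\<^bsub>R\<^esub> \<odot>\<^bsub>quot_mod M N\<^esub> x = x"
      using u by (simp add: quot_smult C)
  next
    fix a x y assume a: "a \<in> carrier R" and x: "x \<in> carrier (quot_mod M N)" and y: "y \<in> carrier (quot_mod M N)"
    obtain u where u: "u \<in> carrier M" "x = N +>\<^bsub>M\<^esub> u" using D[OF x] by blast
    obtain v where v: "v \<in> carrier M" "y = N +>\<^bsub>M\<^esub> v" using D[OF y] by blast
    show "a \<odot>\<^bsub>quot_mod M N\<^esub> (x \<oplus>\<^bsub>quot_mod M N\<^esub> y) = a \<odot>\<^bsub>quot_mod M N\<^esub> x \<oplus>\<^bsub>quot_mod M N\<^esub> a \<odot>\<^bsub>quot_mod M N\<^esub> y"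
      using u v a by (simp add: quot_smult quot_add C smult_r_distr)
  qed
qed

end



definition miso :: "('a, 'b) ring_scheme \<Rightarrow> ('a, 'c, 'd) module_scheme \<Rightarrow> ('a, 'e, 'f) module_scheme \<Rightarrow> ('c \<Rightarrow> 'e) \<Rightarrow> bool"
  where "miso R M1 M2 f \<longleftrightarrow> bij_betw f (carrier M1) (carrier M2) \<and>
    (\<forall>x\<in>carrier M1. \<forall>y\<in>carrier M1. f (x \<oplus>\<^bsub>M1\<^esub> y) = f x \<oplus>\<^bsub>M2\<^esub> f y) \<and>
    (\<forall>r\<in>carrier R. \<forall>x\<in>carrier M1. f (r \<odot>\<^bsub>M1\<^esub> x) = r \<odot>\<^bsub>M2\<^esub> f x)"

lemma miso_zero: assumes "module R M1" "module R M2" "miso R M1 M2 f"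
  shows "f \<zero>\<^bsub>M1\<^esub> = \<zero>\<^bsub>M2\<^esub>"
proof -
  interpret M1: module R M1 by fact
  interpret M2: module R M2 by fact
  have c: "f \<zero>\<^bsub>M1\<^esub> \<in> carrier M2" using assms(3) unfolding miso_def bij_betw_def by auto
  have "f \<zero>\<^bsub>M1\<^esub> \<oplus>\<^bsub>M2\<^esub> f \<zero>\<^bsub>M1\<^esub> = f \<zero>\<^bsub>M1\<^esub> \<oplus>\<^bsub>M2\<^esub> \<zero>\<^bsub>M2\<^esub>"
    using assms(3) c unfolding miso_def by (metis M1.zero_closed M1.l_zero M2.r_zero)
  then show ?thesis using c by (metis M2.add.l_cancel M2.zero_closed)
qed

lemma miso_finsum: assumes "module R M1" "module R M2" "miso R M1 M2 f"
  and "h \<in> S \<rightarrow> carrier M1"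
  shows "f (finsum M1 h S) = finsum M2 (f \<circ> h) S"
proof -
  interpret M1: module R M1 by fact
  interpret M2: module R M2 by fact
  have fc: "\<And>x. x \<in> carrier M1 \<Longrightarrow> f x \<in> carrier M2" using assms(3) unfolding miso_def bij_betw_def by auto
  have add: "\<And>x y. x \<in> carrier M1 \<Longrightarrow> y \<in> carrier M1 \<Longrightarrow> f (x \<oplus>\<^bsub>M1\<^esub> y) = f x \<oplus>\<^bsub>M2\<^esub> f y"
    using assms(3) unfolding miso_def by auto
  show ?thesis
  proof (cases "finite S")
    case False then show ?thesis using miso_zero[OF assms(1-3)] by (simp add: M1.finsum_infinite M2.finsum_infinite)
  next
    case True
    then show ?thesis using assms(4)
    proof (induction S rule: finite_induct)
      case empty then show ?case using miso_zero[OF assms(1-3)] by simp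
    next
      case (insert a F)
      have hF: "h \<in> F \<rightarrow> carrier M1" "h a \<in> carrier M1" using insert.prems by auto
      have "f (finsum M1 h (insert a F)) = f (h a \<oplus>\<^bsub>M1\<^esub> finsum M1 h F)"
        using insert hF by simp
      also have "\<dots> = f (h a) \<oplus>\<^bsub>M2\<^esub> f (finsum M1 h F)" by (rule add[OF hF(2) M1.finsum_closed[OF hF(1)]])
      also have "\<dots> = f (h a) \<oplus>\<^bsub>M2\<^esub> finsum M2 (f \<circ> h) F" using insert hF by (simp add: comp_def)
      also have "\<dots> = finsum M2 (f \<circ> h) (insert a F)"
        using insert hF fc by (subst M2.finsum_insert) (auto simp: Pi_iff)
      finally show ?case .
    qed
  qed
qed

lemma miso_inv: assumes "module R M1" "module R M2" "miso R M1 M2 f"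
  shows "miso R M2 M1 (inv_into (carrier M1) f)"
proof -
  interpret M1: module R M1 by fact
  interpret M2: module R M2 by fact
  let ?g = "inv_into (carrier M1) f"
  have b: "bij_betw f (carrier M1) (carrier M2)" using assms(3) unfolding miso_def by auto
  have bg: "bij_betw ?g (carrier M2) (carrier M1)" by (rule bij_betw_inv_into[OF b])
  have gc: "\<And>y. y \<in> carrier M2 \<Longrightarrow> ?g y \<in> carrier M1" using bg unfolding bij_betw_def by auto
  have fg: "\<And>y. y \<in> carrier M2 \<Longrightarrow> f (?g y) = y" using b by (simp add: bij_betw_inv_into_right)
  have gf: "\<And>x. x \<in> carrier M1 \<Longrightarrow> ?g (f x) = x" using b by (simp add: bij_betw_inv_into_left)
  have add: "\<And>x y. x \<in> carrier M1 \<Longrightarrow> y \<in> carrier M1 \<Longrightarrow> f (x \<oplus>\<^bsub>M1\<^esub> y) = f x \<oplus>\<^bsub>M2\<^esub> f y"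
    using assms(3) unfolding miso_def by auto
  have sm: "\<And>r x. r \<in> carrier R \<Longrightarrow> x \<in> carrier M1 \<Longrightarrow> f (r \<odot>\<^bsub>M1\<^esub> x) = r \<odot>\<^bsub>M2\<^esub> f x"
    using assms(3) unfolding miso_def by auto
  have "?g (x \<oplus>\<^bsub>M2\<^esub> y) = ?g x \<oplus>\<^bsub>M1\<^esub> ?g y" if "x \<in> carrier M2" "y \<in> carrier M2" for x y
  proof -
    have "?g x \<oplus>\<^bsub>M1\<^esub> ?g y = ?g (f (?g x \<oplus>\<^bsub>M1\<^esub> ?g y))" using gf gc that by simp
    also have "\<dots> = ?g (x \<oplus>\<^bsub>M2\<^esub> y)" using add gc fg that by simp
    finally show ?thesis by simp
  qed
  moreover have "?g (r \<odot>\<^bsub>M2\<^esub> x) = r \<odot>\<^bsub>M1\<^esub> ?g x" if "r \<in> carrier R" "x \<in> carrier M2" for r x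
  proof -
    have "r \<odot>\<^bsub>M1\<^esub> ?g x = ?g (f (r \<odot>\<^bsub>M1\<^esub> ?g x))" using gf gc that by simp
    also have "\<dots> = ?g (r \<odot>\<^bsub>M2\<^esub> x)" using sm gc fg that by simp
    finally show ?thesis by simp
  qed
  ultimately show ?thesis using bg unfolding miso_def by blast
qed

lemma miso_k_indep: assumes "module R M1" "module R M2" "miso R M1 M2 f"
  and "S \<subseteq> carrier M1" "k_indep R p M1 S"
  shows "k_indep R p M2 (f ` S)"
proof -
  interpret M1: module R M1 by fact
  interpret M2: module R M2 by fact
  have b: "bij_betw f (carrier M1) (carrier M2)" using assms(3) unfolding miso_def by auto
  have inj: "inj_on f S" using b assms(4) unfolding bij_betw_def by (meson inj_on_subset)
  have fc: "\<And>x. x \<in> carrier M1 \<Longrightarrow> f x \<in> carrier M2" using b unfolding bij_betw_def by auto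
  have sm: "\<And>r x. r \<in> carrier R \<Longrightarrow> x \<in> carrier M1 \<Longrightarrow> f (r \<odot>\<^bsub>M1\<^esub> x) = r \<odot>\<^bsub>M2\<^esub> f x"
    using assms(3) unfolding miso_def by auto
  show ?thesis unfolding k_indep_def
  proof (intro conjI ballI impI)
    show "f ` S \<subseteq> carrier M2" using fc assms(4) by auto
  next
    fix c t assume c: "c \<in> f ` S \<rightarrow> carrier R"
      and z: "(\<Oplus>\<^bsub>M2\<^esub>s\<in>f ` S. c s \<odot>\<^bsub>M2\<^esub> s) = \<zero>\<^bsub>M2\<^esub>" and t: "t \<in> f ` S"
    have h1: "(\<lambda>s. c s \<odot>\<^bsub>M2\<^esub> s) \<in> f ` S \<rightarrow> carrier M2" using c fc assms(4) by auto
    have h2: "(\<lambda>s. c (f s) \<odot>\<^bsub>M1\<^esub> s) \<in> S \<rightarrow> carrier M1" using c assms(4) by auto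
    have "(\<Oplus>\<^bsub>M2\<^esub>s\<in>f ` S. c s \<odot>\<^bsub>M2\<^esub> s) = (\<Oplus>\<^bsub>M2\<^esub>s\<in>S. c (f s) \<odot>\<^bsub>M2\<^esub> f s)"
      by (rule M2.finsum_reindex[OF h1 inj])
    also have "\<dots> = (\<Oplus>\<^bsub>M2\<^esub>s\<in>S. f (c (f s) \<odot>\<^bsub>M1\<^esub> s))"
      using c assms(4) sm fc by (intro M2.finsum_cong') (auto simp: Pi_def subset_iff)
    also have "\<dots> = f (\<Oplus>\<^bsub>M1\<^esub>s\<in>S. c (f s) \<odot>\<^bsub>M1\<^esub> s)"
      using miso_finsum[OF assms(1-3) h2] by (simp add: comp_def)
    finally have "f (\<Oplus>\<^bsub>M1\<^esub>s\<in>S. c (f s) \<odot>\<^bsub>M1\<^esub> s) = f \<zero>\<^bsub>M1\<^esub>" using z miso_zero[OF assms(1-3)] by simp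
    then have "(\<Oplus>\<^bsub>M1\<^esub>s\<in>S. c (f s) \<odot>\<^bsub>M1\<^esub> s) = \<zero>\<^bsub>M1\<^esub>"
      using b h2 M1.finsum_closed unfolding bij_betw_def inj_on_def by blast
    moreover have "(\<lambda>s. c (f s)) \<in> S \<rightarrow> carrier R" using c by auto
    moreover have all: "\<forall>c\<in>S \<rightarrow> carrier R. (\<Oplus>\<^bsub>M1\<^esub>s\<in>S. c s \<odot>\<^bsub>M1\<^esub> s) = \<zero>\<^bsub>M1\<^esub> \<longrightarrow> (\<forall>s\<in>S. c s \<in> cgenideal R p)"
      using assms(5) unfolding k_indep_def by blast
    ultimately have "\<forall>s\<in>S. c (f s) \<in> cgenideal R p"
      using bspec[OF all, of "\<lambda>s. c (f s)"] by simp
    then show "c t \<in> cgenideal R p" using t by auto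
  qed
qed

lemma miso_k_dim: assumes "module R M1" "module R M2" "miso R M1 M2 f"
  shows "k_dim R p M1 = k_dim R p M2"
proof -
  have b: "bij_betw f (carrier M1) (carrier M2)" using assms(3) unfolding miso_def by auto
  let ?g = "inv_into (carrier M1) f"
  have ig: "miso R M2 M1 ?g" by (rule miso_inv[OF assms])
  have bg: "bij_betw ?g (carrier M2) (carrier M1)" using ig unfolding miso_def by auto
  have "(\<exists>S. finite S \<and> card S = n \<and> k_indep R p M1 S) \<longleftrightarrow> (\<exists>S. finite S \<and> card S = n \<and> k_indep R p M2 S)" for n
  proof
    assume "\<exists>S. finite S \<and> card S = n \<and> k_indep R p M1 S"
    then obtain S where S: "finite S" "card S = n" "k_indep R p M1 S" by blast
    have sub: "S \<subseteq> carrier M1" using S(3) unfolding k_indep_def by auto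
    have "inj_on f S" using b sub unfolding bij_betw_def by (meson inj_on_subset)
    then show "\<exists>S. finite S \<and> card S = n \<and> k_indep R p M2 S"
      using S miso_k_indep[OF assms sub S(3)] card_image by (intro exI[of _ "f ` S"]) auto
  next
    assume "\<exists>S. finite S \<and> card S = n \<and> k_indep R p M2 S"
    then obtain S where S: "finite S" "card S = n" "k_indep R p M2 S" by blast
    have sub: "S \<subseteq> carrier M2" using S(3) unfolding k_indep_def by auto
    have "inj_on ?g S" using bg sub unfolding bij_betw_def by (meson inj_on_subset)
    then show "\<exists>S. finite S \<and> card S = n \<and> k_indep R p M1 S"
      using S miso_k_indep[OF assms(2,1) ig sub S(3)] card_image by (intro exI[of _ "?g ` S"]) auto
  qed
  then show ?thesis unfolding k_dim_def by simp
qed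




context module begin

lemma pmult_sub: assumes "submodule S R M" "p \<in> carrier R"
  shows "submodule (pmult R M p j S) R M"
proof -
  note SS = sm_sub[OF assms(1)]
  have pj: "p [^]\<^bsub>R\<^esub> j \<in> carrier R" using assms(2) by simp
  show ?thesis unfolding pmult_def
  proof (rule submoduleI)
    show "(\<odot>\<^bsub>M\<^esub>) (p [^]\<^bsub>R\<^esub> j) ` S \<subseteq> carrier M" using SS(1) pj by auto
    show "\<zero>\<^bsub>M\<^esub> \<in> (\<odot>\<^bsub>M\<^esub>) (p [^]\<^bsub>R\<^esub> j) ` S"
      using SS(2) pj by (intro image_eqI[of _ _ "\<zero>\<^bsub>M\<^esub>"]) auto
  next
    fix a assume "a \<in> (\<odot>\<^bsub>M\<^esub>) (p [^]\<^bsub>R\<^esub> j) ` S"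
    then obtain x where x: "x \<in> S" "a = p [^]\<^bsub>R\<^esub> j \<odot>\<^bsub>M\<^esub> x" by blast
    have "\<ominus>\<^bsub>M\<^esub> a = p [^]\<^bsub>R\<^esub> j \<odot>\<^bsub>M\<^esub> (\<ominus>\<^bsub>M\<^esub> x)" using x SS(1) pj
      by (simp add: smult_r_minus subset_iff)
    then show "\<ominus>\<^bsub>M\<^esub> a \<in> (\<odot>\<^bsub>M\<^esub>) (p [^]\<^bsub>R\<^esub> j) ` S" using x SS by blast
  next
    fix a b assume "a \<in> (\<odot>\<^bsub>M\<^esub>) (p [^]\<^bsub>R\<^esub> j) ` S" "b \<in> (\<odot>\<^bsub>M\<^esub>) (p [^]\<^bsub>R\<^esub> j) ` S"
    then obtain x y where x: "x \<in> S" "a = p [^]\<^bsub>R\<^esub> j \<odot>\<^bsub>M\<^esub> x" "y \<in> S" "b = p [^]\<^bsub>R\<^esub> j \<odot>\<^bsub>M\<^esub> y" by blast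
    have "a \<oplus>\<^bsub>M\<^esub> b = p [^]\<^bsub>R\<^esub> j \<odot>\<^bsub>M\<^esub> (x \<oplus>\<^bsub>M\<^esub> y)" using x SS(1) pj
      by (simp add: smult_r_distr subset_iff)
    then show "a \<oplus>\<^bsub>M\<^esub> b \<in> (\<odot>\<^bsub>M\<^esub>) (p [^]\<^bsub>R\<^esub> j) ` S" using x SS by blast
  next
    fix r a assume r: "r \<in> carrier R" and "a \<in> (\<odot>\<^bsub>M\<^esub>) (p [^]\<^bsub>R\<^esub> j) ` S"
    then obtain x where x: "x \<in> S" "a = p [^]\<^bsub>R\<^esub> j \<odot>\<^bsub>M\<^esub> x" by blast
    have "r \<odot>\<^bsub>M\<^esub> a = p [^]\<^bsub>R\<^esub> j \<odot>\<^bsub>M\<^esub> (r \<odot>\<^bsub>M\<^esub> x)" using x SS(1) pj r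
      by (simp add: smult_assoc1[symmetric] subset_iff m_comm)
    then show "r \<odot>\<^bsub>M\<^esub> a \<in> (\<odot>\<^bsub>M\<^esub>) (p [^]\<^bsub>R\<^esub> j) ` S" using x SS r by blast
  qed
qed

lemma pmult_Suc: assumes "S \<subseteq> carrier M" "p \<in> carrier R"
  shows "pmult R M p (Suc k) S = pmult R M p k (pmult R M p 1 S)"
proof -
  have "p [^]\<^bsub>R\<^esub> Suc k \<odot>\<^bsub>M\<^esub> x = p [^]\<^bsub>R\<^esub> k \<odot>\<^bsub>M\<^esub> (p [^]\<^bsub>R\<^esub> (1::nat) \<odot>\<^bsub>M\<^esub> x)" if "x \<in> S" for x
    using that assms by (simp add: smult_assoc1 subset_iff)
  then show ?thesis unfolding pmult_def by (auto simp: image_image)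
qed

lemma pmult_add: assumes "S \<subseteq> carrier M" "p \<in> carrier R"
  shows "pmult R M p (i + j) S = pmult R M p i (pmult R M p j S)"
proof -
  have "p [^]\<^bsub>R\<^esub> (i + j) \<odot>\<^bsub>M\<^esub> x = p [^]\<^bsub>R\<^esub> i \<odot>\<^bsub>M\<^esub> (p [^]\<^bsub>R\<^esub> j \<odot>\<^bsub>M\<^esub> x)" if "x \<in> S" for x
    using that assms by (simp add: smult_assoc1 subset_iff nat_pow_mult[symmetric])
  then show ?thesis unfolding pmult_def by (auto simp: image_image)
qed

lemma pmult_mono: assumes "submodule S R M" "p \<in> carrier R" "i \<le> j"
  shows "pmult R M p j S \<subseteq> pmult R M p i S"
proof -
  note SS = sm_sub[OF assms(1)]
  have "pmult R M p j S = pmult R M p i (pmult R M p (j - i) S)"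
    using pmult_add[OF SS(1) assms(2), of i "j - i"] assms(3) by simp
  moreover have "pmult R M p (j - i) S \<subseteq> S"
    using sm_sub[OF assms(1)] assms(2) unfolding pmult_def by auto
  ultimately show ?thesis unfolding pmult_def by auto
qed

lemma coset_sub: assumes "submodule N R M" "a \<in> carrier M" shows "N +>\<^bsub>M\<^esub> a \<subseteq> carrier M"
  using sm_sub[OF assms(1)] assms(2) unfolding coset_eq by auto

end

lemma miso_restr: assumes "miso R M1 M2 f" "C \<subseteq> carrier M1"
  shows "miso R (M1\<lparr>carrier := C\<rparr>) (M2\<lparr>carrier := f ` C\<rparr>) f"
  using assms unfolding miso_def bij_betw_def by (auto intro: inj_on_subset simp: subset_iff)

lemma miso_pmult: assumes "module R M1" "module R M2" "miso R M1 M2 f" "S \<subseteq> carrier M1" "p \<in> carrier R"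
  shows "f ` pmult R M1 p j S = pmult R M2 p j (f ` S)"
proof -
  have "f (p [^]\<^bsub>R\<^esub> j \<odot>\<^bsub>M1\<^esub> x) = p [^]\<^bsub>R\<^esub> j \<odot>\<^bsub>M2\<^esub> f x" if "x \<in> S" for x
    using assms that unfolding miso_def
    by (meson module.axioms(1) cring.axioms(1) ring.ring_simprules(1)[of R] monoid.nat_pow_closed ring.is_monoid subsetD)
  then show ?thesis unfolding pmult_def by (auto simp: image_image)
qed

lemma miso_quot: assumes "module R M1" "module R M2" "miso R M1 M2 f" "submodule D R M1"
  shows "miso R (quot_mod M1 D) (quot_mod M2 (f ` D)) (\<lambda>U. f ` U)"
proof -
  interpret M1: module R M1 by fact
  interpret M2: module R M2 by fact
  note DS = M1.sm_sub[OF assms(4)]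
  have b: "bij_betw f (carrier M1) (carrier M2)" using assms(3) unfolding miso_def by auto
  have fc: "\<And>x. x \<in> carrier M1 \<Longrightarrow> f x \<in> carrier M2" using b unfolding bij_betw_def by auto
  have add: "\<And>x y. x \<in> carrier M1 \<Longrightarrow> y \<in> carrier M1 \<Longrightarrow> f (x \<oplus>\<^bsub>M1\<^esub> y) = f x \<oplus>\<^bsub>M2\<^esub> f y"
    using assms(3) unfolding miso_def by auto
  have sm: "\<And>r x. r \<in> carrier R \<Longrightarrow> x \<in> carrier M1 \<Longrightarrow> f (r \<odot>\<^bsub>M1\<^esub> x) = r \<odot>\<^bsub>M2\<^esub> f x"
    using assms(3) unfolding miso_def by auto
  have sadd: "f ` (U <+>\<^bsub>M1\<^esub> V) = f ` U <+>\<^bsub>M2\<^esub> f ` V" if UV: "U \<subseteq> carrier M1" "V \<subseteq> carrier M1" for U V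
  proof (intro Set.set_eqI iffI)
    fix z assume "z \<in> f ` (U <+>\<^bsub>M1\<^esub> V)"
    then obtain u v where uv: "u \<in> U" "v \<in> V" "z = f (u \<oplus>\<^bsub>M1\<^esub> v)" unfolding M1.set_add_eq by blast
    have "u \<in> carrier M1" "v \<in> carrier M1" using uv UV by auto
    then have "z = f u \<oplus>\<^bsub>M2\<^esub> f v" using add uv(3) by simp
    then show "z \<in> f ` U <+>\<^bsub>M2\<^esub> f ` V" unfolding M2.set_add_eq using uv by blast
  next
    fix z assume "z \<in> f ` U <+>\<^bsub>M2\<^esub> f ` V"
    then obtain u v where uv: "u \<in> U" "v \<in> V" "z = f u \<oplus>\<^bsub>M2\<^esub> f v" unfolding M2.set_add_eq by blast
    have "u \<in> carrier M1" "v \<in> carrier M1" using uv UV by auto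
    then have "z = f (u \<oplus>\<^bsub>M1\<^esub> v)" using add uv(3) by simp
    moreover have "u \<oplus>\<^bsub>M1\<^esub> v \<in> U <+>\<^bsub>M1\<^esub> V" unfolding M1.set_add_eq using uv by blast
    ultimately show "z \<in> f ` (U <+>\<^bsub>M1\<^esub> V)" by blast
  qed
  have cos: "f ` (D +>\<^bsub>M1\<^esub> a) = f ` D +>\<^bsub>M2\<^esub> f a" if a: "a \<in> carrier M1" for a
  proof (intro Set.set_eqI iffI)
    fix z assume "z \<in> f ` (D +>\<^bsub>M1\<^esub> a)"
    then obtain u where uv: "u \<in> D" "z = f (u \<oplus>\<^bsub>M1\<^esub> a)" unfolding M1.coset_eq by blast
    have "u \<in> carrier M1" using uv DS(1) by auto
    then have "z = f u \<oplus>\<^bsub>M2\<^esub> f a" using add a uv(2) by simp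
    then show "z \<in> f ` D +>\<^bsub>M2\<^esub> f a" unfolding M2.coset_eq using uv by blast
  next
    fix z assume "z \<in> f ` D +>\<^bsub>M2\<^esub> f a"
    then obtain u where uv: "u \<in> D" "z = f u \<oplus>\<^bsub>M2\<^esub> f a" unfolding M2.coset_eq by blast
    have "u \<in> carrier M1" using uv DS(1) by auto
    then have "z = f (u \<oplus>\<^bsub>M1\<^esub> a)" using add a uv(2) by simp
    moreover have "u \<oplus>\<^bsub>M1\<^esub> a \<in> D +>\<^bsub>M1\<^esub> a" unfolding M1.coset_eq using uv by blast
    ultimately show "z \<in> f ` (D +>\<^bsub>M1\<^esub> a)" by blast
  qed
  have car2: "carrier (quot_mod M2 (f ` D)) = (\<lambda>U. f ` U) ` carrier (quot_mod M1 D)"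
  proof -
    have c2: "carrier M2 = f ` carrier M1" using b unfolding bij_betw_def by auto
    show ?thesis
    proof (intro Set.set_eqI iffI)
      fix Z assume "Z \<in> carrier (quot_mod M2 (f ` D))"
      then obtain bb where bb: "bb \<in> carrier M2" "Z = f ` D +>\<^bsub>M2\<^esub> bb" unfolding M2.quot_carrier by blast
      then obtain a where a: "a \<in> carrier M1" "bb = f a" using c2 by blast
      then have "Z = f ` (D +>\<^bsub>M1\<^esub> a)" using cos bb by simp
      moreover have "D +>\<^bsub>M1\<^esub> a \<in> carrier (quot_mod M1 D)" unfolding M1.quot_carrier using a by blast
      ultimately show "Z \<in> (\<lambda>U. f ` U) ` carrier (quot_mod M1 D)" by blast
    next
      fix Z assume "Z \<in> (\<lambda>U. f ` U) ` carrier (quot_mod M1 D)"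
      then obtain a where a: "a \<in> carrier M1" "Z = f ` (D +>\<^bsub>M1\<^esub> a)" unfolding M1.quot_carrier by blast
      then have "Z = f ` D +>\<^bsub>M2\<^esub> f a" using cos by simp
      then show "Z \<in> carrier (quot_mod M2 (f ` D))" unfolding M2.quot_carrier using a fc by blast
    qed
  qed
  have inj: "inj_on (\<lambda>U. f ` U) (carrier (quot_mod M1 D))"
  proof (rule inj_onI)
    fix U V assume U: "U \<in> carrier (quot_mod M1 D)" and V: "V \<in> carrier (quot_mod M1 D)" and e: "f ` U = f ` V"
    have "U \<subseteq> carrier M1" "V \<subseteq> carrier M1" using U V M1.coset_sub[OF assms(4)] unfolding M1.quot_carrier by auto
    then show "U = V" using e b unfolding bij_betw_def by (meson inj_on_image_eq_iff)
  qed
  show ?thesis unfolding miso_def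
  proof (intro conjI ballI)
    show "bij_betw (\<lambda>U. f ` U) (carrier (quot_mod M1 D)) (carrier (quot_mod M2 (f ` D)))"
      using inj car2 unfolding bij_betw_def by auto
  next
    fix x y assume x: "x \<in> carrier (quot_mod M1 D)" and y: "y \<in> carrier (quot_mod M1 D)"
    have "x \<subseteq> carrier M1" "y \<subseteq> carrier M1" using x y M1.coset_sub[OF assms(4)] unfolding M1.quot_carrier by auto
    then show "f ` (x \<oplus>\<^bsub>quot_mod M1 D\<^esub> y) = f ` x \<oplus>\<^bsub>quot_mod M2 (f ` D)\<^esub> f ` y"
      unfolding M1.quot_add M2.quot_add using sadd by blast
  next
    fix r x assume r: "r \<in> carrier R" and x: "x \<in> carrier (quot_mod M1 D)"
    have xs: "x \<subseteq> carrier M1" using x M1.coset_sub[OF assms(4)] unfolding M1.quot_carrier by auto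
    have "f ` (r \<odot>\<^bsub>quot_mod M1 D\<^esub> x) = f ` ((\<lambda>y. r \<odot>\<^bsub>M1\<^esub> y) ` x) <+>\<^bsub>M2\<^esub> f ` D"
      unfolding M1.quot_smult using xs r DS(1) by (intro sadd) auto
    also have "f ` ((\<lambda>y. r \<odot>\<^bsub>M1\<^esub> y) ` x) = (\<lambda>y. r \<odot>\<^bsub>M2\<^esub> y) ` (f ` x)"
      using xs r sm by (auto simp: image_image subset_iff)
    finally show "f ` (r \<odot>\<^bsub>quot_mod M1 D\<^esub> x) = r \<odot>\<^bsub>quot_mod M2 (f ` D)\<^esub> f ` x"
      unfolding M2.quot_smult .
  qed
qed

lemma miso_ptype: assumes "module R M1" "module R M2" "miso R M1 M2 f" "p \<in> carrier R"
  shows "ptype R p M1 = ptype R p M2"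
proof -
  interpret M1: module R M1 by fact
  interpret M2: module R M2 by fact
  have b: "bij_betw f (carrier M1) (carrier M2)" using assms(3) unfolding miso_def by auto
  have c2: "carrier M2 = f ` carrier M1" using b unfolding bij_betw_def by auto
  have "k_dim R p (quot_mod (M1\<lparr>carrier := pmult R M1 p (i - 1) (carrier M1)\<rparr>) (pmult R M1 p i (carrier M1)))
      = k_dim R p (quot_mod (M2\<lparr>carrier := pmult R M2 p (i - 1) (carrier M2)\<rparr>) (pmult R M2 p i (carrier M2)))"
    if "i \<noteq> 0" for i
  proof -
    let ?C1 = "pmult R M1 p (i - 1) (carrier M1)" and ?D1 = "pmult R M1 p i (carrier M1)"
    have sC: "submodule ?C1 R M1" by (rule M1.pmult_sub[OF M1.carrier_is_submodule assms(4)])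
    have sD: "submodule ?D1 R M1" by (rule M1.pmult_sub[OF M1.carrier_is_submodule assms(4)])
    have DC: "?D1 \<subseteq> ?C1" using M1.pmult_mono[OF M1.carrier_is_submodule assms(4), of "i - 1" i] by simp
    have mP1: "module R (M1\<lparr>carrier := ?C1\<rparr>)" by (rule submodule.submodule_is_module[OF sC assms(1)])
    have sD': "submodule ?D1 R (M1\<lparr>carrier := ?C1\<rparr>)"
      using module.module_incl_imp_submodule[OF mP1, of ?D1] DC submodule.submodule_is_module[OF sD assms(1)]
      by simp
    have C2: "f ` ?C1 = pmult R M2 p (i - 1) (carrier M2)" using miso_pmult[OF assms(1-3) _ assms(4)] c2 by simp
    have D2: "f ` ?D1 = pmult R M2 p i (carrier M2)" using miso_pmult[OF assms(1-3) _ assms(4)] c2 by simp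
    have sC2: "submodule (f ` ?C1) R M2" unfolding C2 by (rule M2.pmult_sub[OF M2.carrier_is_submodule assms(4)])
    have mP2: "module R (M2\<lparr>carrier := f ` ?C1\<rparr>)" by (rule submodule.submodule_is_module[OF sC2 assms(2)])
    have iP: "miso R (M1\<lparr>carrier := ?C1\<rparr>) (M2\<lparr>carrier := f ` ?C1\<rparr>) f"
      by (rule miso_restr[OF assms(3)]) (use sC M1.sm_sub in auto)
    have iQ: "miso R (quot_mod (M1\<lparr>carrier := ?C1\<rparr>) ?D1) (quot_mod (M2\<lparr>carrier := f ` ?C1\<rparr>) (f ` ?D1)) (\<lambda>U. f ` U)"
      by (rule miso_quot[OF mP1 mP2 iP sD'])
    have sD2': "submodule (f ` ?D1) R (M2\<lparr>carrier := f ` ?C1\<rparr>)"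
    proof -
      have sD2: "submodule (f ` ?D1) R M2" unfolding D2 by (rule M2.pmult_sub[OF M2.carrier_is_submodule assms(4)])
      show ?thesis using module.module_incl_imp_submodule[OF mP2, of "f ` ?D1"] DC submodule.submodule_is_module[OF sD2 assms(2)]
        by auto
    qed
    have "k_dim R p (quot_mod (M1\<lparr>carrier := ?C1\<rparr>) ?D1) = k_dim R p (quot_mod (M2\<lparr>carrier := f ` ?C1\<rparr>) (f ` ?D1))"
      by (rule miso_k_dim[OF module.quot_module[OF mP1 sD'] module.quot_module[OF mP2 sD2'] iQ])
    then show ?thesis unfolding C2 D2 .
  qed
  then show ?thesis unfolding ptype_def by (metis (no_types, lifting))
qed




context module begin

lemma coset_in: assumes "submodule N R M" "x \<in> N" shows "N +>\<^bsub>M\<^esub> x = N"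
proof (intro Set.set_eqI iffI)
  note S = sm_sub[OF assms(1)]
  fix z assume "z \<in> N +>\<^bsub>M\<^esub> x"
  then obtain n where "n \<in> N" "z = n \<oplus>\<^bsub>M\<^esub> x" unfolding coset_eq by blast
  then show "z \<in> N" using S(3) assms(2) by simp
next
  note S = sm_sub[OF assms(1)]
  fix z assume z: "z \<in> N"
  have c: "z \<in> carrier M" "x \<in> carrier M" using z assms(2) S(1) by auto
  have "z = (z \<oplus>\<^bsub>M\<^esub> \<ominus>\<^bsub>M\<^esub> x) \<oplus>\<^bsub>M\<^esub> x" using c by (simp add: a_assoc l_neg)
  moreover have "z \<oplus>\<^bsub>M\<^esub> \<ominus>\<^bsub>M\<^esub> x \<in> N" using S(3,4) z assms(2) by simp
  ultimately show "z \<in> N +>\<^bsub>M\<^esub> x" unfolding coset_eq by blast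
qed

lemma coset_self: assumes "submodule N R M" "x \<in> carrier M" shows "x \<in> N +>\<^bsub>M\<^esub> x"
proof -
  have "x = \<zero>\<^bsub>M\<^esub> \<oplus>\<^bsub>M\<^esub> x" using assms(2) by simp
  then show ?thesis unfolding coset_eq using sm_sub(2)[OF assms(1)] by blast
qed

lemma coset_eqD: assumes "submodule N R M" "y \<in> carrier M" "N +>\<^bsub>M\<^esub> x = N +>\<^bsub>M\<^esub> y"
  shows "\<exists>n\<in>N. y = n \<oplus>\<^bsub>M\<^esub> x"
  using coset_self[OF assms(1,2)] assms(3) unfolding coset_eq by blast

lemma coset_zero_iff: assumes "submodule N R M" "x \<in> carrier M"
  shows "N +>\<^bsub>M\<^esub> x = N \<longleftrightarrow> x \<in> N"
  using coset_in[OF assms(1)] coset_self[OF assms] by blast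

lemma set_add_sub: assumes "submodule S R M" "submodule T R M"
  shows "submodule (S <+>\<^bsub>M\<^esub> T) R M"
proof -
  note A = sm_sub[OF assms(1)] and B = sm_sub[OF assms(2)]
  show ?thesis
  proof (rule submoduleI)
    show "S <+>\<^bsub>M\<^esub> T \<subseteq> carrier M" unfolding set_add_eq using A(1) B(1) by auto
    have "\<zero>\<^bsub>M\<^esub> = \<zero>\<^bsub>M\<^esub> \<oplus>\<^bsub>M\<^esub> \<zero>\<^bsub>M\<^esub>" by simp
    then show "\<zero>\<^bsub>M\<^esub> \<in> S <+>\<^bsub>M\<^esub> T" unfolding set_add_eq using A(2) B(2) by blast
  next
    fix a assume "a \<in> S <+>\<^bsub>M\<^esub> T"
    then obtain u v where uv: "u \<in> S" "v \<in> T" "a = u \<oplus>\<^bsub>M\<^esub> v" unfolding set_add_eq by blast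
    have c: "u \<in> carrier M" "v \<in> carrier M" using uv A(1) B(1) by auto
    have "\<ominus>\<^bsub>M\<^esub> a = \<ominus>\<^bsub>M\<^esub> u \<oplus>\<^bsub>M\<^esub> \<ominus>\<^bsub>M\<^esub> v" using c uv(3) by (simp add: minus_add)
    then show "\<ominus>\<^bsub>M\<^esub> a \<in> S <+>\<^bsub>M\<^esub> T" unfolding set_add_eq using uv A(4) B(4) by blast
  next
    fix a b assume "a \<in> S <+>\<^bsub>M\<^esub> T" "b \<in> S <+>\<^bsub>M\<^esub> T"
    then obtain u v u' v' where uv: "u \<in> S" "v \<in> T" "a = u \<oplus>\<^bsub>M\<^esub> v" "u' \<in> S" "v' \<in> T" "b = u' \<oplus>\<^bsub>M\<^esub> v'"
      unfolding set_add_eq by blast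
    have c: "u \<in> carrier M" "v \<in> carrier M" "u' \<in> carrier M" "v' \<in> carrier M" using uv A(1) B(1) by auto
    have "a \<oplus>\<^bsub>M\<^esub> b = (u \<oplus>\<^bsub>M\<^esub> u') \<oplus>\<^bsub>M\<^esub> (v \<oplus>\<^bsub>M\<^esub> v')" using c uv(3,6) by (simp add: a_ac)
    moreover have "u \<oplus>\<^bsub>M\<^esub> u' \<in> S" "v \<oplus>\<^bsub>M\<^esub> v' \<in> T" using uv A(3) B(3) by auto
    ultimately show "a \<oplus>\<^bsub>M\<^esub> b \<in> S <+>\<^bsub>M\<^esub> T" unfolding set_add_eq by blast
  next
    fix r a assume r: "r \<in> carrier R" and "a \<in> S <+>\<^bsub>M\<^esub> T"
    then obtain u v where uv: "u \<in> S" "v \<in> T" "a = u \<oplus>\<^bsub>M\<^esub> v" unfolding set_add_eq by blast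
    have c: "u \<in> carrier M" "v \<in> carrier M" using uv A(1) B(1) by auto
    have "r \<odot>\<^bsub>M\<^esub> a = r \<odot>\<^bsub>M\<^esub> u \<oplus>\<^bsub>M\<^esub> r \<odot>\<^bsub>M\<^esub> v" using c uv(3) r by (simp add: smult_r_distr)
    moreover have "r \<odot>\<^bsub>M\<^esub> u \<in> S" "r \<odot>\<^bsub>M\<^esub> v \<in> T" using uv A(5) B(5) r by auto
    ultimately show "r \<odot>\<^bsub>M\<^esub> a \<in> S <+>\<^bsub>M\<^esub> T" unfolding set_add_eq by blast
  qed
qed

lemma inter_sub: assumes "submodule S R M" "submodule T R M"
  shows "submodule (S \<inter> T) R M"
proof -
  note A = sm_sub[OF assms(1)] and B = sm_sub[OF assms(2)]
  show ?thesis by (rule submoduleI) (use A B in auto)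
qed

lemma set_add_super: assumes "submodule S R M" "submodule T R M" shows "S \<subseteq> S <+>\<^bsub>M\<^esub> T"
proof
  fix x assume x: "x \<in> S"
  have "x = x \<oplus>\<^bsub>M\<^esub> \<zero>\<^bsub>M\<^esub>" using x sm_sub(1)[OF assms(1)] by auto
  then show "x \<in> S <+>\<^bsub>M\<^esub> T" unfolding set_add_eq using x sm_sub(2)[OF assms(2)] by blast
qed

end

locale qmod = module R M for R :: "('a, 'b) ring_scheme" and M :: "('a, 'c, 'd) module_scheme" +
  fixes N assumes Nsub: "submodule N R M"
begin

abbreviation "Q \<equiv> quot_mod M N"
abbreviation "pr \<equiv> (\<lambda>a. N +>\<^bsub>M\<^esub> a)"

lemma Qmod: "module R Q" by (rule quot_module[OF Nsub])

lemma Nc: "N \<subseteq> carrier M" using sm_sub(1)[OF Nsub] .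

lemma pr_add: "a \<in> carrier M \<Longrightarrow> b \<in> carrier M \<Longrightarrow> pr a \<oplus>\<^bsub>Q\<^esub> pr b = pr (a \<oplus>\<^bsub>M\<^esub> b)"
  by (simp add: quot_add coset_sum[OF Nsub])

lemma pr_smult: "a \<in> carrier M \<Longrightarrow> r \<in> carrier R \<Longrightarrow> r \<odot>\<^bsub>Q\<^esub> pr a = pr (r \<odot>\<^bsub>M\<^esub> a)"
  by (simp add: quot_smult coset_smult[OF Nsub])

lemma pr_carrier: "carrier Q = pr ` carrier M"
  unfolding quot_carrier by blast

lemma pr_closed: "a \<in> carrier M \<Longrightarrow> pr a \<in> carrier Q"
  unfolding pr_carrier by blast

lemma pmult_pr: assumes "S \<subseteq> carrier M" "p \<in> carrier R"
  shows "pmult R Q p j (pr ` S) = pr ` pmult R M p j S"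
proof -
  have "p [^]\<^bsub>R\<^esub> j \<odot>\<^bsub>Q\<^esub> pr x = pr (p [^]\<^bsub>R\<^esub> j \<odot>\<^bsub>M\<^esub> x)" if "x \<in> S" for x
    using that assms pr_smult by (simp add: subset_iff)
  then show ?thesis unfolding pmult_def by (auto simp: image_image)
qed

lemma setadd_pr: assumes "S \<subseteq> carrier M" "T \<subseteq> carrier M"
  shows "(pr ` S) <+>\<^bsub>Q\<^esub> (pr ` T) = pr ` (S <+>\<^bsub>M\<^esub> T)"
proof (intro Set.set_eqI iffI)
  fix z assume "z \<in> (pr ` S) <+>\<^bsub>Q\<^esub> (pr ` T)"
  then obtain u v where uv: "u \<in> S" "v \<in> T" "z = pr u \<oplus>\<^bsub>Q\<^esub> pr v"
    unfolding module.set_add_eq[OF Qmod] by blast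
  have "z = pr (u \<oplus>\<^bsub>M\<^esub> v)" using uv assms pr_add by (auto simp: subset_iff)
  moreover have "u \<oplus>\<^bsub>M\<^esub> v \<in> S <+>\<^bsub>M\<^esub> T" unfolding set_add_eq using uv by blast
  ultimately show "z \<in> pr ` (S <+>\<^bsub>M\<^esub> T)" by blast
next
  fix z assume "z \<in> pr ` (S <+>\<^bsub>M\<^esub> T)"
  then obtain u v where uv: "u \<in> S" "v \<in> T" "z = pr (u \<oplus>\<^bsub>M\<^esub> v)"
    unfolding set_add_eq by blast
  have "z = pr u \<oplus>\<^bsub>Q\<^esub> pr v" using uv assms pr_add by (auto simp: subset_iff)
  then show "z \<in> (pr ` S) <+>\<^bsub>Q\<^esub> (pr ` T)" unfolding module.set_add_eq[OF Qmod] using uv by blast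
qed

lemma inter_pr: assumes "submodule S R M" "N \<subseteq> S" "T \<subseteq> carrier M"
  shows "pr ` S \<inter> pr ` T = pr ` (S \<inter> T)"
proof (intro Set.set_eqI iffI)
  fix z assume "z \<in> pr ` S \<inter> pr ` T"
  then obtain s t where st: "s \<in> S" "t \<in> T" "z = pr s" "z = pr t" by blast
  have "t \<in> carrier M" using st assms(3) by auto
  then obtain n where n: "n \<in> N" "t = n \<oplus>\<^bsub>M\<^esub> s" using coset_eqD[OF Nsub] st by metis
  then have "t \<in> S" using sm_sub(3)[OF assms(1)] assms(2) st(1) by auto
  then show "z \<in> pr ` (S \<inter> T)" using st by blast
qed auto

lemma pr_sub: assumes "submodule W R M" "N \<subseteq> W"
  shows "submodule (pr ` W) R Q"
proof -
  note XS = sm_sub[OF assms(1)]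
  interpret Q: module R Q by (rule Qmod)
  show ?thesis
  proof (rule Q.submoduleI)
    show "pr ` W \<subseteq> carrier Q" using XS(1) pr_closed by auto
    have "pr \<zero>\<^bsub>M\<^esub> = N" by (rule coset_in[OF Nsub sm_sub(2)[OF Nsub]])
    then show "\<zero>\<^bsub>Q\<^esub> \<in> pr ` W" using XS(2) quot_zero by (metis image_eqI)
  next
    fix a assume "a \<in> pr ` W"
    then obtain x where x: "x \<in> W" "a = pr x" by blast
    have xc: "x \<in> carrier M" using x XS(1) by auto
    have "pr (\<ominus>\<^bsub>M\<^esub> x) \<oplus>\<^bsub>Q\<^esub> pr x = \<zero>\<^bsub>Q\<^esub>"
      using xc pr_add coset_in[OF Nsub sm_sub(2)[OF Nsub]] by (simp add: quot_zero l_neg)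
    then have "\<ominus>\<^bsub>Q\<^esub> a = pr (\<ominus>\<^bsub>M\<^esub> x)"
      using x xc pr_closed by (simp add: Q.minus_equality)
    then show "\<ominus>\<^bsub>Q\<^esub> a \<in> pr ` W" using XS(4) x by blast
  next
    fix a b assume "a \<in> pr ` W" "b \<in> pr ` W"
    then obtain x y where x: "x \<in> W" "a = pr x" "y \<in> W" "b = pr y" by blast
    have "a \<oplus>\<^bsub>Q\<^esub> b = pr (x \<oplus>\<^bsub>M\<^esub> y)" using x XS(1) pr_add by (auto simp: subset_iff)
    then show "a \<oplus>\<^bsub>Q\<^esub> b \<in> pr ` W" using XS(3) x by blast
  next
    fix r a assume r: "r \<in> carrier R" and "a \<in> pr ` W"
    then obtain x where x: "x \<in> W" "a = pr x" by blast
    have "r \<odot>\<^bsub>Q\<^esub> a = pr (r \<odot>\<^bsub>M\<^esub> x)" using x XS(1) r pr_smult by (auto simp: subset_iff)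
    then show "r \<odot>\<^bsub>Q\<^esub> a \<in> pr ` W" using XS(5) x r by blast
  qed
qed

lemma dq_coset: assumes "submodule W R M" "N \<subseteq> W" "a \<in> carrier M"
  shows "(pr ` W) +>\<^bsub>Q\<^esub> (pr a) = pr ` (W +>\<^bsub>M\<^esub> a)"
proof (intro Set.set_eqI iffI)
  note XS = sm_sub[OF assms(1)]
  fix z assume "z \<in> (pr ` W) +>\<^bsub>Q\<^esub> (pr a)"
  then obtain x where x: "x \<in> W" "z = pr x \<oplus>\<^bsub>Q\<^esub> pr a" unfolding module.coset_eq[OF Qmod] by blast
  then have "z = pr (x \<oplus>\<^bsub>M\<^esub> a)" using pr_add XS(1) assms(3) by auto
  moreover have "x \<oplus>\<^bsub>M\<^esub> a \<in> W +>\<^bsub>M\<^esub> a" unfolding coset_eq using x by blast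
  ultimately show "z \<in> pr ` (W +>\<^bsub>M\<^esub> a)" by blast
next
  note XS = sm_sub[OF assms(1)]
  fix z assume "z \<in> pr ` (W +>\<^bsub>M\<^esub> a)"
  then obtain x where x: "x \<in> W" "z = pr (x \<oplus>\<^bsub>M\<^esub> a)" unfolding coset_eq by blast
  then have "z = pr x \<oplus>\<^bsub>Q\<^esub> pr a" using pr_add XS(1) assms(3) by auto
  then show "z \<in> (pr ` W) +>\<^bsub>Q\<^esub> (pr a)" unfolding module.coset_eq[OF Qmod] using x by blast
qed

lemma dq_union: assumes "submodule W R M" "N \<subseteq> W" "a \<in> carrier M"
  shows "\<Union> (pr ` (W +>\<^bsub>M\<^esub> a)) = W +>\<^bsub>M\<^esub> a"
proof (intro Set.set_eqI iffI)
  note XS = sm_sub[OF assms(1)]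
  fix z assume "z \<in> \<Union> (pr ` (W +>\<^bsub>M\<^esub> a))"
  then obtain x n where xn: "x \<in> W" "n \<in> N" "z = n \<oplus>\<^bsub>M\<^esub> (x \<oplus>\<^bsub>M\<^esub> a)" unfolding coset_eq by blast
  have c: "x \<in> carrier M" "n \<in> carrier M" using xn XS(1) assms(2) by auto
  have "z = (n \<oplus>\<^bsub>M\<^esub> x) \<oplus>\<^bsub>M\<^esub> a" using xn(3) c assms(3) by (simp add: a_assoc)
  moreover have "n \<oplus>\<^bsub>M\<^esub> x \<in> W" using XS(3) xn assms(2) by auto
  ultimately show "z \<in> W +>\<^bsub>M\<^esub> a" unfolding coset_eq by blast
next
  note XS = sm_sub[OF assms(1)]
  fix z assume z: "z \<in> W +>\<^bsub>M\<^esub> a"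
  have "z \<in> carrier M" using coset_sub[OF assms(1,3)] z by auto
  then have "z \<in> pr z" by (rule coset_self[OF Nsub])
  then show "z \<in> \<Union> (pr ` (W +>\<^bsub>M\<^esub> a))" using z by blast
qed

lemma dq_iso: assumes "submodule W R M" "N \<subseteq> W"
  shows "miso R (quot_mod Q (pr ` W)) (quot_mod M W) (\<lambda>U. \<Union>U)"
proof -
  interpret Q: module R Q by (rule Qmod)
  have sY: "submodule (pr ` W) R Q" by (rule pr_sub[OF assms])
  have carQ: "carrier (quot_mod Q (pr ` W)) = {pr ` (W +>\<^bsub>M\<^esub> a) | a. a \<in> carrier M}"
    unfolding Q.quot_carrier pr_carrier using dq_coset[OF assms] by blast
  have cos: "\<And>a. a \<in> carrier M \<Longrightarrow> pr ` (W +>\<^bsub>M\<^esub> a) = (pr ` W) +>\<^bsub>Q\<^esub> (pr a)"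
    using dq_coset[OF assms] by simp
  have un: "\<And>a. a \<in> carrier M \<Longrightarrow> \<Union> (pr ` (W +>\<^bsub>M\<^esub> a)) = W +>\<^bsub>M\<^esub> a" by (rule dq_union[OF assms])
  have bij: "bij_betw (\<lambda>U. \<Union>U) (carrier (quot_mod Q (pr ` W))) (carrier (quot_mod M W))"
  proof (rule bij_betw_byWitness[where f' = "\<lambda>V. pr ` V"])
    show "\<forall>U\<in>carrier (quot_mod Q (pr ` W)). pr ` \<Union> U = U" unfolding carQ using un by auto
    show "\<forall>V\<in>carrier (quot_mod M W). \<Union> (pr ` V) = V" unfolding quot_carrier using un by auto
    show "(\<lambda>U. \<Union> U) ` carrier (quot_mod Q (pr ` W)) \<subseteq> carrier (quot_mod M W)"
      unfolding carQ quot_carrier using un by auto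
    show "(`) pr ` carrier (quot_mod M W) \<subseteq> carrier (quot_mod Q (pr ` W))"
      unfolding carQ quot_carrier by auto
  qed
  show ?thesis unfolding miso_def
  proof (intro conjI ballI)
    show "bij_betw (\<lambda>U. \<Union>U) (carrier (quot_mod Q (pr ` W))) (carrier (quot_mod M W))" by (rule bij)
  next
    fix U V assume U: "U \<in> carrier (quot_mod Q (pr ` W))" and V: "V \<in> carrier (quot_mod Q (pr ` W))"
    obtain a where a: "a \<in> carrier M" "U = pr ` (W +>\<^bsub>M\<^esub> a)" using U unfolding carQ by blast
    obtain b where b: "b \<in> carrier M" "V = pr ` (W +>\<^bsub>M\<^esub> b)" using V unfolding carQ by blast
    have "U \<oplus>\<^bsub>quot_mod Q (pr ` W)\<^esub> V = pr ` (W +>\<^bsub>M\<^esub> (a \<oplus>\<^bsub>M\<^esub> b))"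
    proof -
      have "U \<oplus>\<^bsub>quot_mod Q (pr ` W)\<^esub> V = (pr ` W +>\<^bsub>Q\<^esub> pr a) <+>\<^bsub>Q\<^esub> (pr ` W +>\<^bsub>Q\<^esub> pr b)"
        using a b cos by (simp add: Q.quot_add)
      also have "\<dots> = pr ` W +>\<^bsub>Q\<^esub> (pr a \<oplus>\<^bsub>Q\<^esub> pr b)"
        by (rule Q.coset_sum[OF sY pr_closed[OF a(1)] pr_closed[OF b(1)]])
      also have "\<dots> = pr ` (W +>\<^bsub>M\<^esub> (a \<oplus>\<^bsub>M\<^esub> b))" using a b cos pr_add by simp
      finally show ?thesis .
    qed
    then show "\<Union> (U \<oplus>\<^bsub>quot_mod Q (pr ` W)\<^esub> V) = \<Union> U \<oplus>\<^bsub>quot_mod M W\<^esub> \<Union> V"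
      using a b un by (simp add: quot_add coset_sum[OF assms(1)])
  next
    fix r U assume r: "r \<in> carrier R" and U: "U \<in> carrier (quot_mod Q (pr ` W))"
    obtain a where a: "a \<in> carrier M" "U = pr ` (W +>\<^bsub>M\<^esub> a)" using U unfolding carQ by blast
    have "r \<odot>\<^bsub>quot_mod Q (pr ` W)\<^esub> U = pr ` (W +>\<^bsub>M\<^esub> (r \<odot>\<^bsub>M\<^esub> a))"
    proof -
      have "r \<odot>\<^bsub>quot_mod Q (pr ` W)\<^esub> U = ((\<lambda>x. r \<odot>\<^bsub>Q\<^esub> x) ` (pr ` W +>\<^bsub>Q\<^esub> pr a)) <+>\<^bsub>Q\<^esub> (pr ` W)"
        using a cos by (simp add: Q.quot_smult)
      also have "\<dots> = pr ` W +>\<^bsub>Q\<^esub> (r \<odot>\<^bsub>Q\<^esub> pr a)"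
        by (rule Q.coset_smult[OF sY pr_closed[OF a(1)] r])
      also have "\<dots> = pr ` (W +>\<^bsub>M\<^esub> (r \<odot>\<^bsub>M\<^esub> a))" using a r cos pr_smult by simp
      finally show ?thesis .
    qed
    then show "\<Union> (r \<odot>\<^bsub>quot_mod Q (pr ` W)\<^esub> U) = r \<odot>\<^bsub>quot_mod M W\<^esub> \<Union> U"
      using a r un by (simp add: quot_smult coset_smult[OF assms(1)])
  qed
qed

lemma dq_ptype: assumes "submodule W R M" "N \<subseteq> W" "p \<in> carrier R"
  shows "ptype R p (quot_mod Q (pr ` W)) = ptype R p (quot_mod M W)"
  by (rule miso_ptype[OF module.quot_module[OF Qmod pr_sub[OF assms(1,2)]] quot_module[OF assms(1)] dq_iso[OF assms(1,2)] assms(3)])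

end



context module begin

lemma pmult_stab: assumes "submodule S R M" "p \<in> carrier R"
  and "pmult R M p (Suc n) S = pmult R M p n S"
  shows "pmult R M p (n + k) S = pmult R M p n S"
proof (induction k)
  case 0 then show ?case by simp
next
  case (Suc k)
  have Sc: "S \<subseteq> carrier M" using sm_sub(1)[OF assms(1)] .
  have c1: "pmult R M p (n + k) S \<subseteq> carrier M" "pmult R M p n S \<subseteq> carrier M"
    using sm_sub(1)[OF pmult_sub[OF assms(1,2)]] by auto
  have "pmult R M p (n + Suc k) S = pmult R M p (1 + (n + k)) S" by simp
  also have "\<dots> = pmult R M p 1 (pmult R M p (n + k) S)" by (rule pmult_add[OF Sc assms(2)])
  also have "\<dots> = pmult R M p 1 (pmult R M p n S)" using Suc by simp
  also have "\<dots> = pmult R M p (1 + n) S" by (rule pmult_add[OF Sc assms(2), symmetric])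
  also have "\<dots> = pmult R M p n S" using assms(3) by simp
  finally show ?case .
qed

lemma zero_in_pmult: assumes "submodule S R M" "p \<in> carrier R"
  shows "\<zero>\<^bsub>M\<^esub> \<in> pmult R M p n S"
  using sm_sub(2)[OF pmult_sub[OF assms]] .

end

lemma lemma9_main:
  fixes R :: "('a, 'b) ring_scheme" and M :: "('a, 'c, 'd) module_scheme"
    and p :: 'a and A :: "'c set" and l :: nat
  assumes "principal_domain R"
    and "p \<in> carrier R" and "maximalideal (cgenideal R p) R"
    and "p_module R p M"
    and "submodule A R M"
    and "l \<le> expo R p M A"
  shows "klein R p (quot_mod M (pmult R M p l A)) ((\<lambda>a. a_r_coset M (pmult R M p l A) a) ` A)
         = restr (klein R p M A) l"
proof -
  have modM: "module R M" using assms(4) unfolding p_module_def by auto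
  interpret M: module R M by (rule modM)
  define N where "N = pmult R M p l A"
  have Nsub: "submodule N R M" unfolding N_def by (rule M.pmult_sub[OF assms(5,2)])
  interpret q: qmod R M N using modM Nsub by (simp add: qmod_def qmod_axioms_def)
  have Ac: "A \<subseteq> carrier M" using M.sm_sub(1)[OF assms(5)] .
  have pc: "p \<in> carrier R" by fact
  let ?A' = "(\<lambda>a. N +>\<^bsub>M\<^esub> a) ` A"
  define e where "e = expo R p M A"
  have le: "l \<le> e" using assms(6) e_def by simp
  obtain n0 :: nat where n0: "\<forall>x\<in>carrier M. p [^]\<^bsub>R\<^esub> n0 \<odot>\<^bsub>M\<^esub> x = \<zero>\<^bsub>M\<^esub>"
    using assms(4) unfolding p_module_def by blast
  have "pmult R M p n0 A = {\<zero>\<^bsub>M\<^esub>}"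
    using n0 Ac M.zero_in_pmult[OF assms(5) pc, of n0] unfolding pmult_def by auto
  then have ex: "\<exists>n. pmult R M p n A = {\<zero>\<^bsub>M\<^esub>}" by blast
  have eA: "pmult R M p e A = {\<zero>\<^bsub>M\<^esub>}" unfolding e_def expo_def by (rule LeastI_ex[OF ex])
  have eL: "\<And>n. pmult R M p n A = {\<zero>\<^bsub>M\<^esub>} \<Longrightarrow> e \<le> n" unfolding e_def expo_def by (rule Least_le)
  have pmA': "\<And>n. pmult R q.Q p n ?A' = (\<lambda>a. N +>\<^bsub>M\<^esub> a) ` pmult R M p n A"
    by (rule q.pmult_pr[OF Ac pc])
  have zeroiff: "pmult R q.Q p n ?A' = {\<zero>\<^bsub>q.Q\<^esub>} \<longleftrightarrow> pmult R M p n A \<subseteq> N" for n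
  proof -
    have sub: "pmult R M p n A \<subseteq> carrier M" using M.sm_sub(1)[OF M.pmult_sub[OF assms(5) pc]] .
    have ne: "\<zero>\<^bsub>M\<^esub> \<in> pmult R M p n A" by (rule M.zero_in_pmult[OF assms(5) pc])
    have "(\<lambda>a. N +>\<^bsub>M\<^esub> a) ` pmult R M p n A = {N} \<longleftrightarrow> pmult R M p n A \<subseteq> N"
      using M.coset_zero_iff[OF Nsub] sub ne by (auto simp: subset_iff)
    then show ?thesis using pmA' by (simp add: M.quot_zero)
  qed
  have expoQ: "expo R p q.Q ?A' = l"
    unfolding expo_def zeroiff
  proof (rule Least_equality)
    show "pmult R M p l A \<subseteq> N" unfolding N_def by simp
  next
    fix n assume nN: "pmult R M p n A \<subseteq> N"
    show "l \<le> n"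
    proof (rule ccontr)
      assume "\<not> l \<le> n"
      then have nl: "n < l" by simp
      have "pmult R M p l A \<subseteq> pmult R M p (Suc n) A" using M.pmult_mono[OF assms(5) pc] nl by simp
      moreover have "pmult R M p (Suc n) A \<subseteq> pmult R M p n A" using M.pmult_mono[OF assms(5) pc] by simp
      ultimately have st: "pmult R M p (Suc n) A = pmult R M p n A" using nN unfolding N_def by blast
      have "pmult R M p (n + (e - n)) A = pmult R M p n A" by (rule M.pmult_stab[OF assms(5) pc st])
      then have "pmult R M p n A = {\<zero>\<^bsub>M\<^esub>}" using eA nl le by simp
      then have "e \<le> n" by (rule eL)
      then show False using nl le by simp
    qed
  qed
  have gamEq: "gam R p q.Q ?A' i = gam R p M A i" if "i \<le> l" for i
  proof -
    have W: "submodule (pmult R M p i A) R M" by (rule M.pmult_sub[OF assms(5) pc])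
    have NW: "N \<subseteq> pmult R M p i A" unfolding N_def by (rule M.pmult_mono[OF assms(5) pc that])
    show ?thesis unfolding gam_def pmA' by (rule q.dq_ptype[OF W NW pc])
  qed
  have gam2Eq: "gam2 R p q.Q ?A' j r = gam2 R p M A j r" if "j \<le> l" for j r
  proof -
    let ?P = "pmult R M p (j - 2) A" and ?T = "pmult R M p r (carrier M)"
    have sP: "submodule ?P R M" by (rule M.pmult_sub[OF assms(5) pc])
    have sT: "submodule ?T R M" by (rule M.pmult_sub[OF M.carrier_is_submodule pc])
    have NP: "N \<subseteq> ?P" unfolding N_def by (rule M.pmult_mono[OF assms(5) pc]) (use that in simp)
    have sPT: "submodule (?P \<inter> ?T) R M" by (rule M.inter_sub[OF sP sT])
    have s1: "submodule (pmult R M p 1 (?P \<inter> ?T)) R M" by (rule M.pmult_sub[OF sPT pc])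
    have sj: "submodule (pmult R M p j A) R M" by (rule M.pmult_sub[OF assms(5) pc])
    let ?W = "pmult R M p j A <+>\<^bsub>M\<^esub> pmult R M p 1 (?P \<inter> ?T)"
    have sW: "submodule ?W R M" by (rule M.set_add_sub[OF sj s1])
    have NW: "N \<subseteq> ?W"
      using M.set_add_super[OF sj s1] M.pmult_mono[OF assms(5) pc that] unfolding N_def by blast
    have carQ: "carrier q.Q = (\<lambda>a. N +>\<^bsub>M\<^esub> a) ` carrier M" by (rule q.pr_carrier)
    have e1: "pmult R q.Q p r (carrier q.Q) = (\<lambda>a. N +>\<^bsub>M\<^esub> a) ` ?T"
      unfolding carQ by (rule q.pmult_pr[OF subset_refl pc])
    have e2: "pmult R q.Q p (j - 2) ?A' \<inter> pmult R q.Q p r (carrier q.Q) = (\<lambda>a. N +>\<^bsub>M\<^esub> a) ` (?P \<inter> ?T)"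
      unfolding e1 unfolding pmA' by (rule q.inter_pr[OF sP NP M.sm_sub(1)[OF sT]])
    have e3: "pmult R q.Q p 1 (pmult R q.Q p (j - 2) ?A' \<inter> pmult R q.Q p r (carrier q.Q))
        = (\<lambda>a. N +>\<^bsub>M\<^esub> a) ` pmult R M p 1 (?P \<inter> ?T)"
      unfolding e2 by (rule q.pmult_pr[OF M.sm_sub(1)[OF sPT] pc])
    have e4: "pmult R q.Q p j ?A' <+>\<^bsub>q.Q\<^esub> pmult R q.Q p 1 (pmult R q.Q p (j - 2) ?A' \<inter> pmult R q.Q p r (carrier q.Q))
        = (\<lambda>a. N +>\<^bsub>M\<^esub> a) ` ?W"
      unfolding e3 unfolding pmA' by (rule q.setadd_pr[OF M.sm_sub(1)[OF sj] M.sm_sub(1)[OF s1]])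
    show ?thesis unfolding gam2_def e4 by (rule q.dq_ptype[OF sW NW pc])
  qed
  have phiEq: "phi R p q.Q ?A' j = phi R p M A j" if "j \<le> l" for j
  proof -
    have g1: "gam R p q.Q ?A' j = gam R p M A j" by (rule gamEq[OF that])
    have g2: "gam R p q.Q ?A' (j - 1) = gam R p M A (j - 1)" by (rule gamEq) (use that in simp)
    have g3: "gam2 R p q.Q ?A' j = gam2 R p M A j" using gam2Eq[OF that] by (rule ext)
    have sk: "skew R p q.Q ?A' j = skew R p M A j" unfolding skew_def g1 g2 ..
    show ?thesis unfolding phi_def phi_ok_def sk g3 ..
  qed
  have fstEq: "map (gam R p q.Q ?A') [0..<l + 1] = take (l + 1) (map (gam R p M A) [0..<e + 1])"
  proof -
    have "take (l + 1) [0..<e + 1] = [0..<0 + (l + 1)]" by (rule take_upt) (use le in simp)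
    then have t: "take (l + 1) [0..<e + 1] = [0..<l + 1]" by simp
    have 1: "take (l + 1) (map (gam R p M A) [0..<e + 1]) = map (gam R p M A) [0..<l + 1]"
      by (simp only: take_map t)
    have 2: "map (gam R p q.Q ?A') [0..<l + 1] = map (gam R p M A) [0..<l + 1]"
      by (rule map_cong[OF refl]) (use gamEq in auto)
    show ?thesis using 1 2 by metis
  qed
  have sndEq: "map (phi R p q.Q ?A') [2..<l + 1] = take (l - 1) (map (phi R p M A) [2..<e + 1])"
  proof (cases "l = 0")
    case True then show ?thesis by simp
  next
    case False
    have "take (l - 1) [2..<e + 1] = [2..<2 + (l - 1)]" by (rule take_upt) (use le False in simp)
    then have t: "take (l - 1) [2..<e + 1] = [2..<l + 1]" using False by simp
    have 1: "take (l - 1) (map (phi R p M A) [2..<e + 1]) = map (phi R p M A) [2..<l + 1]"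
      by (simp only: take_map t)
    have 2: "map (phi R p q.Q ?A') [2..<l + 1] = map (phi R p M A) [2..<l + 1]"
      by (rule map_cong[OF refl]) (use phiEq in auto)
    show ?thesis using 1 2 by metis
  qed
  show ?thesis
    unfolding klein_def restr_def N_def[symmetric] expoQ e_def[symmetric]
    using fstEq sndEq by simp
qed



theorem lemma9:
  fixes R :: "('a, 'b) ring_scheme" and M :: "('a, 'c, 'd) module_scheme"
    and p :: 'a and A :: "'c set" and l :: nat
  assumes "principal_domain R"
    and "p \<in> carrier R" and "maximalideal (cgenideal R p) R"
    and "p_module R p M"
    and "submodule A R M"
    and "l \<le> expo R p M A"
  shows "klein R p (quot_mod M (pmult R M p l A)) ((\<lambda>a. a_r_coset M (pmult R M p l A) a) ` A)
         = restr (klein R p M A) l"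
  by (rule lemma9_main[OF assms])

end
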